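(* Let $N,B,W,T$ be positive integers with $N\le B$, $B+1\le W$ and $T\ge B$, and set $T_{\mathrm{eff}}=\min(T,W-1)$. If a rate $R$ is achievable with delay $T$ over the channel $\mathcal{C}(N,B,W)$, then \[ \left(\frac{R}{1-R}\right)B+N\le T_{\mathrm{eff}}+1 . \]
   Context: Channel $\mathcal{C}(N,B,W)$: a packet erasure channel on a sequence of channel uses $i=0,1,2,\dots$ such that in every sliding window of $W$ consecutive channel uses, the set of erased positions is either a single burst of consecutive erasures of length at most $B$, or consists of at most $N$ erasures in arbitrary positions. Streaming code (equal source–channel rates): at each time $i\ge 0$ the encoder observes a source symbol $\mathbf{s}[i]\in\mathbb{F}_q^k$ and transmits $\mathbf{x}[i]=f_i(\mathbf{s}[0],\dots,\mathbf{s}[i])\in\mathbb{F}_q^n$; the channel output is $\mathbf{y}[i]=\mathbf{x}[i]$ or $\mathbf{y}[i]=\star$ (erasure). The code has delay $T$ if there are decoding functions with $\mathbf{s}[i]=g_i(\mathbf{y}[0],\dots,\mathbf{y}[i+T])$ for every $i\ge0$, every source sequence and every erasure pattern allowed by the channel. Its rate is $R=k/n$. A rate $R$ is achievable with delay $T$ over $\mathcal{C}(N,B,W)$ if such a streaming code of rate $R$ exists over some field size $q$. *)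

theory Defs
  imports Complex_Main
begin

text \<open>Erasure patterns are sets E of erased channel-use indices.\<close>
definition admissible_erasures :: "nat \<Rightarrow> nat \<Rightarrow> nat \<Rightarrow> nat set \<Rightarrow> bool" where
  "admissible_erasures N B W E \<longleftrightarrow>
     (\<forall>j. (\<exists>a l. l \<le> B \<and> E \<inter> {j..<j+W} = {a..<a+l}) \<or> card (E \<inter> {j..<j+W}) \<le> N)"

text \<open>Source symbols in F^k are lists of length k, channel symbols in F^n lists of length n.
  enc i [s0,...,si] = x[i]; dec i [y0,...,y(i+T)] = s[i]; erasure = None.\<close>
definition channel_output ::
  "(nat \<Rightarrow> 'f list list \<Rightarrow> 'f list) \<Rightarrow> (nat \<Rightarrow> 'f list) \<Rightarrow> nat set \<Rightarrow> nat \<Rightarrow> 'f list option" where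
  "channel_output enc s E t = (if t \<in> E then None else Some (enc t (map s [0..<Suc t])))"

definition is_streaming_code ::
  "nat \<Rightarrow> nat \<Rightarrow> nat \<Rightarrow> nat \<Rightarrow> nat \<Rightarrow> nat
   \<Rightarrow> (nat \<Rightarrow> 'f list list \<Rightarrow> 'f list) \<Rightarrow> (nat \<Rightarrow> 'f list option list \<Rightarrow> 'f list) \<Rightarrow> bool" where
  "is_streaming_code k n T N B W enc dec \<longleftrightarrow>
     (\<forall>s. (\<forall>i. length (s i) = k) \<longrightarrow>
        (\<forall>i. length (enc i (map s [0..<Suc i])) = n) \<and>
        (\<forall>E. admissible_erasures N B W E \<longrightarrow>
           (\<forall>i. dec i (map (channel_output enc s E) [0..<Suc (i+T)]) = s i)))"

definition achievable :: "('f::{finite,field}) itself \<Rightarrow> real \<Rightarrow> nat \<Rightarrow> nat \<Rightarrow> nat \<Rightarrow> nat \<Rightarrow> bool" where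
  "achievable _ R T N B W \<longleftrightarrow>
     (\<exists>k n (enc :: nat \<Rightarrow> 'f list list \<Rightarrow> 'f list) dec.
        n > 0 \<and> R = real k / real n \<and> is_streaming_code k n T N B W enc dec)"

end

theory Submission
  imports Defs
begin

lemma modchar:
  fixes m p t B :: nat
  assumes "m*p \<le> t" "t < m*p + 2*p"
  shows "(t mod p < B) \<longleftrightarrow> (t < m*p + B \<or> (m*p+p \<le> t \<and> t < m*p+p+B))"
proof -
  obtain r where r: "t = m*p + r" using assms(1) le_Suc_ex by blast
  have tm: "t mod p = r mod p" using r by (simp add: add.commute mult.commute)
  show ?thesis
  proof (cases "r < p")
    case True thus ?thesis using r tm by auto
  next
    case False
    then have "r mod p = r - p" using r assms(2) by (simp add: le_mod_geq)
    thus ?thesis using r tm False by auto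
  qed
qed

lemma burst_gen:
  fixes N B Te p a b c :: nat and Q :: "nat \<Rightarrow> bool"
  assumes ch: "\<And>t. a \<le> t \<Longrightarrow> t < b \<Longrightarrow> (Q t \<longleftrightarrow> (t < c + B \<or> (c+p \<le> t \<and> t < c+p+B)))"
    and m1: "c \<le> a" and m2: "a < c + p"
    and "N \<le> B" "p = B + Te + 1 - N" "b \<le> a + Te + 1" "N \<le> Te"
  shows "(\<exists>c l. l \<le> B \<and> {t. Q t} \<inter> {a..<b} = {c..<c+l})
         \<or> card ({t. Q t} \<inter> {a..<b}) \<le> N"
proof -
  have pB: "p > B" using assms(4,5,7) by linarith
  show ?thesis
  proof (cases "a \<ge> c+B")
    case True
    have "{t. Q t} \<inter> {a..<b} = {c+p..<(c+p) + (min b (c+p+B) - (c+p))}"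
      proof (rule set_eqI)
        fix t show "t \<in> {t. Q t} \<inter> {a..<b} \<longleftrightarrow> t \<in> {c+p..<(c+p) + (min b (c+p+B) - (c+p))}"
          using ch[of t] True m2 by (cases "a \<le> t \<and> t < b") auto
      qed
    moreover have "min b (c+p+B) - (c+p) \<le> B" by (cases "b \<le> c+p+B") (simp_all add: min_def)
    ultimately show ?thesis by blast
  next
    case False
    show ?thesis
    proof (cases "b \<le> c+p")
      case True
      have "{t. Q t} \<inter> {a..<b} = {a..<a + (min b (c+B) - a)}"
        proof (rule set_eqI)
          fix t show "t \<in> {t. Q t} \<inter> {a..<b} \<longleftrightarrow> t \<in> {a..<a + (min b (c+B) - a)}"
            using ch[of t] True False by (cases "a \<le> t \<and> t < b") auto
        qed
      moreover have "min b (c+B) - a \<le> B" using m1 by (cases "b \<le> c+B") (simp_all add: min_def)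
      ultimately show ?thesis by blast
    next
      case b2: False
      have hb: "b < c+p+B" using assms(4,5,6) False by linarith
      have "{t. Q t} \<inter> {a..<b} = {a..<c+B} \<union> {c+p..<b}"
        proof (rule set_eqI)
          fix t show "t \<in> {t. Q t} \<inter> {a..<b} \<longleftrightarrow> t \<in> {a..<c+B} \<union> {c+p..<b}"
            using ch[of t] False b2 m2 hb pB by (cases "a \<le> t \<and> t < b") auto
        qed
      hence "card ({t. Q t} \<inter> {a..<b}) \<le> card {a..<c+B} + card {c+p..<b}"
        by (metis card_Un_le)
      also have "\<dots> \<le> N" using assms(4,5,6,7) False b2 unfolding card_atLeastLessThan by linarith
      finally show ?thesis by simp
    qed
  qed
qed

lemma burst:
  fixes N B Te p a b :: nat
  assumes "N \<le> B" "N \<le> Te" "p = B + Te + 1 - N" "b \<le> a + Te + 1"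
  shows "(\<exists>c l. l \<le> B \<and> {t. t mod p < B} \<inter> {a..<b} = {c..<c+l})
         \<or> card ({t. t mod p < B} \<inter> {a..<b}) \<le> N"
proof -
  define m where "m = a div p"
  have pB: "p > B" using assms by simp
  have ae: "a = m*p + a mod p" unfolding m_def by simp
  have am: "a mod p < p" using pB by simp
  have m1: "m*p \<le> a" using ae by linarith
  have m2: "a < m*p + p" using ae am by linarith
  have bb: "b < m*p + 2*p" using assms m2 by linarith
  have ch: "\<And>t. a \<le> t \<Longrightarrow> t < b \<Longrightarrow> (t mod p < B) \<longleftrightarrow> (t < m*p + B \<or> (m*p+p \<le> t \<and> t < m*p+p+B))"
    by (rule modchar) (use m1 bb in auto)
  show ?thesis by (rule burst_gen[OF ch m1 m2 assms(1,3,4,2)])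
qed


lemma adm:
  assumes "N \<le> B" "N \<le> Te" "p = B + Te + 1 - N" "Te = min T (W - 1)" "0 < W"
  shows "admissible_erasures N B W ({t. t mod p < B} \<inter> {i..i+T})"
  unfolding admissible_erasures_def
proof
  fix j
  have eq: "({t. t mod p < B} \<inter> {i..i+T}) \<inter> {j..<j+W}
      = {t. t mod p < B} \<inter> {max i j..<min (i+T+1) (j+W)}" by auto
  have "min (i+T+1) (j+W) \<le> max i j + Te + 1" using assms(4,5) by auto
  from burst[OF assms(1,2,3) this] show "(\<exists>a l. l \<le> B \<and> ({t. t mod p < B} \<inter> {i..i+T}) \<inter> {j..<j+W} = {a..<a+l}) \<or>
        card (({t. t mod p < B} \<inter> {i..i+T}) \<inter> {j..<j+W}) \<le> N"
    unfolding eq by blast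
qed

lemma count_block:
  fixes p B M :: nat
  assumes "B \<le> p"
  shows "length (filter (\<lambda>t. \<not> t mod p < B) [0..<M*p]) = M*(p-B)"
proof (induction M)
  case 0 then show ?case by simp
next
  case (Suc M)
  have sp: "[0..<Suc M * p] = [0..<M*p] @ [M*p..<M*p+p]"
    using upt_add_eq_append[of 0 "M*p" p] by (simp add: add.commute)
  have "length (filter (\<lambda>t. \<not> t mod p < B) [M*p..<M*p+p])
      = card {i. i < length [M*p..<M*p+p] \<and> \<not> [M*p..<M*p+p]!i mod p < B}"
    by (rule length_filter_conv_card)
  also have "\<dots> = card {B..<p}"
    by (rule arg_cong[where f=card]) auto
  finally have a: "length (filter (\<lambda>t. \<not> t mod p < B) [M*p..<M*p+p]) = p - B" by simp
  have "length (filter (\<lambda>t. \<not> t mod p < B) [0..<Suc M * p]) =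
     length (filter (\<lambda>t. \<not> t mod p < B) [0..<M*p]) + length (filter (\<lambda>t. \<not> t mod p < B) [M*p..<M*p+p])"
    by (simp only: sp filter_append length_append)
  then show ?case using Suc a assms by (simp add: algebra_simps)
qed


lemma count_U:
  fixes p B M T :: nat
  assumes "B \<le> p"
  shows "length (filter (\<lambda>t. \<not> t mod p < B) [0..<M*p+T]) \<le> M*(p-B) + T"
proof -
  have sp: "[0..<M*p+T] = [0..<M*p] @ [M*p..<M*p+T]"
    using upt_add_eq_append[of 0 "M*p" T] by simp
  have "length (filter (\<lambda>t. \<not> t mod p < B) [M*p..<M*p+T]) \<le> T"
    using length_filter_le[of _ "[M*p..<M*p+T]"] by simp
  moreover have "length (filter (\<lambda>t. \<not> t mod p < B) [0..<M*p+T]) =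
     length (filter (\<lambda>t. \<not> t mod p < B) [0..<M*p]) + length (filter (\<lambda>t. \<not> t mod p < B) [M*p..<M*p+T])"
    by (simp only: sp filter_append length_append)
  ultimately show ?thesis using count_block[OF assms, of M] by linarith
qed


lemma rate_count:
  fixes enc :: "nat \<Rightarrow> ('f::{finite,field}) list list \<Rightarrow> 'f list"
    and dec :: "nat \<Rightarrow> 'f list option list \<Rightarrow> 'f list"
  assumes code: "is_streaming_code k n T N B W enc dec"
    and a1: "N \<le> B" "N \<le> Te" "p = B + Te + 1 - N" "Te = min T (W - 1)" "0 < W"
  shows "k * (M*p) \<le> n * (M*(p-B) + T)"
proof -
  define L where "L = M*p"
  define Q where "Q = (\<lambda>t::nat. \<not> t mod p < B)"
  define ext where "ext = (\<lambda>ss::'f list list. \<lambda>i. if i < L then ss!i else replicate k 0)"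
  define \<Phi> where "\<Phi> = (\<lambda>ss. map (\<lambda>t. enc t (map (ext ss) [0..<Suc t])) (filter Q [0..<L+T]))"
  define U where "U = length (filter Q [0..<L+T])"
  define A where "A = {xs. set xs \<subseteq> {v::'f list. length v = k} \<and> length xs = L}"
  define D where "D = {xs. set xs \<subseteq> {v::'f list. length v = n} \<and> length xs = U}"
  define q where "q = card (UNIV::'f set)"
  have q2: "1 < q"
  proof -
    have "card {0::'f,1} \<le> q" unfolding q_def by (rule card_mono) auto
    thus ?thesis by simp
  qed
  have cardv: "\<And>j. card {v::'f list. length v = j} = q^j"
    using card_lists_length_eq[of "UNIV::'f set"] by (simp add: q_def)
  have finv: "\<And>j. finite {v::'f list. length v = j}"
    using finite_lists_length_eq[of "UNIV::'f set"] by simp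
  have cA: "card A = q^(k*L)" unfolding A_def
    by (simp add: card_lists_length_eq finv cardv power_mult)
  have cD: "card D = q^(n*U)" unfolding D_def
    by (simp add: card_lists_length_eq finv cardv power_mult)
  have fD: "finite D" unfolding D_def by (simp add: finite_lists_length_eq finv)
  have extlen: "\<And>xs i. xs \<in> A \<Longrightarrow> length (ext xs i) = k"
    unfolding A_def ext_def by (auto dest: nth_mem)
  have codeS: "\<And>xs. xs \<in> A \<Longrightarrow> (\<forall>i. length (enc i (map (ext xs) [0..<Suc i])) = n) \<and>
      (\<forall>E. admissible_erasures N B W E \<longrightarrow>
         (\<forall>i. dec i (map (channel_output enc (ext xs) E) [0..<Suc (i+T)]) = ext xs i))"
    using code extlen unfolding is_streaming_code_def by blast
  have img: "\<Phi> ` A \<subseteq> D" unfolding D_def \<Phi>_def U_def using codeS by auto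
  have inj: "inj_on \<Phi> A"
  proof (rule inj_onI)
    fix xs ys assume xA: "xs \<in> A" and yA: "ys \<in> A" and eq: "\<Phi> xs = \<Phi> ys"
    have obs: "\<And>t. t < L+T \<Longrightarrow> Q t \<Longrightarrow> enc t (map (ext xs) [0..<Suc t]) = enc t (map (ext ys) [0..<Suc t])"
      using eq unfolding \<Phi>_def map_eq_conv by auto
    have agree: "ext xs i = ext ys i" if "i < L" for i
      using that
    proof (induct i rule: less_induct)
      case (less i)
      have IH: "\<And>j. j < i \<Longrightarrow> j < L \<Longrightarrow> ext xs j = ext ys j" using less.hyps .
      have iL: "i < L" using less.prems .
      define E where "E = {t. t mod p < B} \<inter> {i..i+T}"
      have ad: "admissible_erasures N B W E" unfolding E_def by (rule adm[OF a1])
      have "map (channel_output enc (ext xs) E) [0..<Suc (i+T)] = map (channel_output enc (ext ys) E) [0..<Suc (i+T)]"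
      proof (rule map_cong[OF refl])
        fix t assume "t \<in> set [0..<Suc (i+T)]"
        hence tle: "t \<le> i+T" by auto
        show "channel_output enc (ext xs) E t = channel_output enc (ext ys) E t"
        proof (cases "t \<in> E")
          case True thus ?thesis by (simp add: channel_output_def)
        next
          case False
          show ?thesis
          proof (cases "t < i")
            case True
            have "map (ext xs) [0..<Suc t] = map (ext ys) [0..<Suc t]"
              using IH True iL by auto
            thus ?thesis unfolding channel_output_def by (simp only:)
          next
            case ti: False
            have "Q t" using False ti tle unfolding E_def Q_def by auto
            moreover have "t < L+T" using tle iL by linarith
            ultimately show ?thesis using obs False by (simp add: channel_output_def)
          qed
        qed
      qed
      thus ?case using codeS[OF xA] codeS[OF yA] ad by metis
    qed
    show "xs = ys"
    proof (rule nth_equalityI)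
      show "length xs = length ys" using xA yA unfolding A_def by simp
      fix i assume "i < length xs"
      hence "i < L" using xA unfolding A_def by simp
      thus "xs ! i = ys ! i" using agree[of i] unfolding ext_def by simp
    qed
  qed
  have "card A \<le> card D" by (rule card_inj_on_le[OF inj img fD])
  hence "q^(k*L) \<le> q^(n*U)" using cA cD by simp
  hence kl: "k*L \<le> n*U" using q2 power_le_imp_le_exp by blast
  have "B \<le> p" using a1 by linarith
  from count_U[OF this, of M T] have "U \<le> M*(p-B) + T" unfolding U_def Q_def L_def .
  hence "n*U \<le> n*(M*(p-B) + T)" by (rule mult_le_mono2)
  with kl show ?thesis unfolding L_def by linarith
qed

theorem theorem1:
  fixes N B W T :: nat and R :: real
  assumes "0 < N" "0 < B" "0 < W" "0 < T"
    and "N \<le> B" "B + 1 \<le> W" "T \<ge> B"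
    and "achievable TYPE('f::{finite,field}) R T N B W"
  shows "(R / (1 - R)) * real B + real N \<le> real (min T (W - 1)) + 1"
proof -
  obtain k n and enc :: "nat \<Rightarrow> 'f list list \<Rightarrow> 'f list" and dec where
    n0: "n > 0" and Rk: "R = real k / real n" and code: "is_streaming_code k n T N B W enc dec"
    using assms(8) unfolding achievable_def by blast
  define Te where "Te = min T (W - 1)"
  define p where "p = B + Te + 1 - N"
  have NTe: "N \<le> Te" unfolding Te_def using assms by simp
  show ?thesis
  proof (cases "k < n")
    case False
    hence "R \<ge> 1" using n0 unfolding Rk by (simp add: le_divide_eq)
    hence "R / (1 - R) \<le> 0" by (simp add: divide_nonneg_nonpos)
    hence "(R / (1 - R)) * real B \<le> 0" by (rule mult_nonpos_nonneg) simp
    moreover have "real N \<le> real Te + 1" using NTe by simp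
    ultimately show ?thesis unfolding Te_def by linarith
  next
    case True
    have key: "k*p \<le> n*(p-B)"
    proof (rule ccontr)
      assume "\<not> k*p \<le> n*(p-B)"
      hence h: "n*(p-B) + 1 \<le> k*p" by simp
      define M where "M = n*T + 1"
      have rc: "k*(M*p) \<le> n*(M*(p-B) + T)"
        by (rule rate_count[OF code assms(5) NTe p_def Te_def assms(3)])
      have "M*(n*(p-B)+1) \<le> M*(k*p)" using h by (rule mult_le_mono2)
      hence "n*(M*(p-B)) + M \<le> k*(M*p)" by (simp add: algebra_simps)
      with rc have "M \<le> n*T" by (simp add: algebra_simps)
      thus False unfolding M_def by simp
    qed
    have pB: "p = B + (Te + 1 - N)" unfolding p_def using NTe by simp
    have "k*B + k*(Te+1-N) \<le> n*(Te+1-N)" using key unfolding pB by (simp add: algebra_simps)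
    hence "k*B \<le> (n-k)*(Te+1-N)" by (simp add: diff_mult_distrib)
    hence i1: "real k * real B \<le> real (n-k) * (real Te + 1 - real N)"
      using NTe by (metis of_nat_mult of_nat_le_iff of_nat_diff of_nat_add of_nat_1 le_SucI Suc_eq_plus1)
    have nk: "real (n-k) > 0" using True by simp
    have r: "R / (1 - R) = real k / real (n-k)"
      using True n0 unfolding Rk by (simp add: field_simps of_nat_diff)
    have "real k / real (n-k) * real B \<le> real Te + 1 - real N"
      using i1 nk by (simp add: field_simps)
    thus ?thesis unfolding r Te_def by (simp only: le_diff_eq)
  qed
qed

end
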